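(* Define: - $I:{}_H\mathcal M\to\mathbb T({}_H\mathcal M)$ by $I(M)=(M,\mathrm{id}_M)$ and $I(f)=f$; - $R:\mathbb T({}_H\mathcal M)\to{}_H\mathcal M^{par}$ by $R(M,T)=(T(M),\pi_{T})$, where $\pi_{T}(h)(m)=T(h\triangleright m)$ for $m\in T(M)$, and $R(f)=f$ on morphisms. Then $I$ and $R$ are fully faithful functors, and the inclusion functor $i:{}_H\mathcal M\to{}_H\mathcal M^{par}$ equals the composite $R\circ I$.
   Context: Throughout, $k$ is a field and $H$ is a Hopf algebra over $k$ with bijective antipode $S$ and Sweedler notation $\Delta(h)=h_{(1)}\otimes h_{(2)}$. A partial $H$-module is a vector space $M$ with linear $\pi:H\to\mathrm{End}_k(M)$ satisfying, for all $h,k\in H$: - $\pi(1_H)=\mathrm{id}$; - $\pi(h)\pi(k_{(1)})\pi(S(k_{(2)}))=\pi(hk_{(1)})\pi(S(k_{(2)}))$; - $\pi(h_{(1)})\pi(S(h_{(2)}))\pi(k)=\pi(h_{(1)})\pi(S(h_{(2)})k)$; - $\pi(h)\pi(S(k_{(1)}))\pi(k_{(2)})=\pi(hS(k_{(1)}))\pi(k_{(2)})$; - $\pi(S(h_{(1)}))\pi(h_{(2)})\pi(k)=\pi(S(h_{(1)}))\pi(h_{(2)}k)$. Morphisms of partial $H$-modules are linear maps commuting with all $\pi(h)$; they form the category ${}_H\mathcal M^{par}$. The inclusion $i$ regards a left $H$-module $M$ as the partial module $\pi(h)(m)=h\triangleright m$. For a left $H$-module $M$ and a linear projection $T$, put $T_h(m)=h_{(1)}\triangleright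 T(S(h_{(2)})\triangleright m)$. $T$ satisfies the c-condition if $T_h\circ T=T\circ T_h$ for all $h$. The category $\mathbb T({}_H\mathcal M)$ is defined as follows: - objects are pairs $(M,T)$ with $M$ a left $H$-module and $T$ a projection satisfying the c-condition; - morphisms $(M,T)\to(N,S)$ are linear maps $f:T(M)\to S(N)$ with $f(T(h\triangleright m))=S(h\triangleright f(m))$ for all $h\in H$, $m\in T(M)$. *)

theory Defs
  imports Complex_Main
begin

text \<open>
  An element of H (x) H is represented by a finite list of pairs (a,b), standing for
  the sum of the a (x) b.  Two such lists represent the same tensor iff they agree under
  all pairs (resp. triples) of linear functionals H -> k (over a field this characterises
  equality in the tensor product).  The comultiplication is a function returning such a
  Sweedler list; the lists are only ever used through expressions which are linear in the
  tensor, so the choice of representative is immaterial.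
\<close>

definition tens2 :: "('h \<Rightarrow> 'k::comm_ring_1) \<Rightarrow> ('h \<Rightarrow> 'k) \<Rightarrow> ('h \<times> 'h) list \<Rightarrow> 'k" where
  "tens2 f g t = sum_list (map (\<lambda>(a, b). f a * g b) t)"

definition tens3 :: "('h \<Rightarrow> 'k::comm_ring_1) \<Rightarrow> ('h \<Rightarrow> 'k) \<Rightarrow> ('h \<Rightarrow> 'k)
    \<Rightarrow> ('h \<times> 'h \<times> 'h) list \<Rightarrow> 'k" where
  "tens3 f g l t = sum_list (map (\<lambda>(a, b, c). f a * g b * l c) t)"

definition teq2 :: "('k::field \<Rightarrow> 'h::ab_group_add \<Rightarrow> 'h) \<Rightarrow> ('h \<times> 'h) list \<Rightarrow> ('h \<times> 'h) list \<Rightarrow> bool" where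
  "teq2 sH t u \<longleftrightarrow> (\<forall>f g. Vector_Spaces.linear sH (*) f \<longrightarrow> Vector_Spaces.linear sH (*) g
      \<longrightarrow> tens2 f g t = tens2 f g u)"

definition teq3 :: "('k::field \<Rightarrow> 'h::ab_group_add \<Rightarrow> 'h) \<Rightarrow> ('h \<times> 'h \<times> 'h) list
    \<Rightarrow> ('h \<times> 'h \<times> 'h) list \<Rightarrow> bool" where
  "teq3 sH t u \<longleftrightarrow> (\<forall>f g l. Vector_Spaces.linear sH (*) f \<longrightarrow> Vector_Spaces.linear sH (*) g
      \<longrightarrow> Vector_Spaces.linear sH (*) l \<longrightarrow> tens3 f g l t = tens3 f g l u)"

definition hopf_algebra :: "('k::field \<Rightarrow> 'h::ring_1 \<Rightarrow> 'h) \<Rightarrow> ('h \<Rightarrow> ('h \<times> 'h) list)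
    \<Rightarrow> ('h \<Rightarrow> 'k) \<Rightarrow> ('h \<Rightarrow> 'h) \<Rightarrow> bool" where
  "hopf_algebra sH \<Delta> \<epsilon> S \<longleftrightarrow>
     vector_space sH \<and>
     (\<forall>c x y. sH c (x * y) = sH c x * y \<and> sH c (x * y) = x * sH c y) \<and>
     \<comment> \<open>comultiplication is linear\<close>
     (\<forall>c x y. teq2 sH (\<Delta> (sH c x + y)) (map (\<lambda>(a, b). (sH c a, b)) (\<Delta> x) @ \<Delta> y)) \<and>
     \<comment> \<open>coassociativity\<close>
     (\<forall>h. teq3 sH [(a1, a2, b). (a, b) \<leftarrow> \<Delta> h, (a1, a2) \<leftarrow> \<Delta> a]
                    [(a, b1, b2). (a, b) \<leftarrow> \<Delta> h, (b1, b2) \<leftarrow> \<Delta> b]) \<and>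
     \<comment> \<open>counit\<close>
     Vector_Spaces.linear sH (*) \<epsilon> \<and>
     (\<forall>h. sum_list (map (\<lambda>(a, b). sH (\<epsilon> a) b) (\<Delta> h)) = h \<and>
          sum_list (map (\<lambda>(a, b). sH (\<epsilon> b) a) (\<Delta> h)) = h) \<and>
     \<comment> \<open>bialgebra: comultiplication and counit are algebra maps\<close>
     (\<forall>x y. teq2 sH (\<Delta> (x * y)) [(a * c, b * d). (a, b) \<leftarrow> \<Delta> x, (c, d) \<leftarrow> \<Delta> y]) \<and>
     teq2 sH (\<Delta> 1) [(1, 1)] \<and>
     (\<forall>x y. \<epsilon> (x * y) = \<epsilon> x * \<epsilon> y) \<and> \<epsilon> 1 = 1 \<and>
     \<comment> \<open>antipode\<close>
     Vector_Spaces.linear sH sH S \<and>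
     (\<forall>h. sum_list (map (\<lambda>(a, b). S a * b) (\<Delta> h)) = sH (\<epsilon> h) 1 \<and>
          sum_list (map (\<lambda>(a, b). a * S b) (\<Delta> h)) = sH (\<epsilon> h) 1) \<and>
     \<comment> \<open>standing assumption: bijective antipode\<close>
     bij S"

definition hmodule :: "('k::field \<Rightarrow> 'h::ring_1 \<Rightarrow> 'h) \<Rightarrow> ('k \<Rightarrow> 'm::ab_group_add \<Rightarrow> 'm)
    \<Rightarrow> ('h \<Rightarrow> 'm \<Rightarrow> 'm) \<Rightarrow> bool" where
  "hmodule sH sM act \<longleftrightarrow>
     vector_space sM \<and>
     (\<forall>h. Vector_Spaces.linear sM sM (act h)) \<and>
     (\<forall>c h k m. act (sH c h + k) m = sM c (act h m) + act k m) \<and>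
     (\<forall>m. act 1 m = m) \<and>
     (\<forall>h k m. act (h * k) m = act h (act k m))"

definition mhom :: "('k::field \<Rightarrow> 'm::ab_group_add \<Rightarrow> 'm) \<Rightarrow> ('h \<Rightarrow> 'm \<Rightarrow> 'm)
    \<Rightarrow> ('k \<Rightarrow> 'n::ab_group_add \<Rightarrow> 'n) \<Rightarrow> ('h \<Rightarrow> 'n \<Rightarrow> 'n) \<Rightarrow> ('m \<Rightarrow> 'n) \<Rightarrow> bool" where
  "mhom sM actM sN actN f \<longleftrightarrow>
     Vector_Spaces.linear sM sN f \<and> (\<forall>h m. f (actM h m) = actN h (f m))"

definition lin_on :: "('k \<Rightarrow> 'm::ab_group_add \<Rightarrow> 'm) \<Rightarrow> ('k \<Rightarrow> 'n::ab_group_add \<Rightarrow> 'n)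
    \<Rightarrow> 'm set \<Rightarrow> ('m \<Rightarrow> 'n) \<Rightarrow> bool" where
  "lin_on sM sN V f \<longleftrightarrow> (\<forall>c. \<forall>x\<in>V. \<forall>y\<in>V. f (sM c x + y) = sN c (f x) + f y)"

definition par_module :: "('k::field \<Rightarrow> 'h::ring_1 \<Rightarrow> 'h) \<Rightarrow> ('h \<Rightarrow> ('h \<times> 'h) list)
    \<Rightarrow> ('h \<Rightarrow> 'h) \<Rightarrow> ('k \<Rightarrow> 'm::ab_group_add \<Rightarrow> 'm) \<Rightarrow> 'm set \<times> ('h \<Rightarrow> 'm \<Rightarrow> 'm) \<Rightarrow> bool" where
  "par_module sH \<Delta> S sM P \<longleftrightarrow>
     (case P of (V, \<pi>) \<Rightarrow>
       vector_space sM \<and> module.subspace sM V \<and>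
       (\<forall>h. \<forall>m\<in>V. \<pi> h m \<in> V) \<and>
       (\<forall>h. lin_on sM sM V (\<pi> h)) \<and>
       (\<forall>c h k. \<forall>m\<in>V. \<pi> (sH c h + k) m = sM c (\<pi> h m) + \<pi> k m) \<and>
       (\<forall>m\<in>V. \<pi> 1 m = m) \<and>
       (\<forall>h k. \<forall>m\<in>V. sum_list (map (\<lambda>(a, b). \<pi> h (\<pi> a (\<pi> (S b) m))) (\<Delta> k))
                   = sum_list (map (\<lambda>(a, b). \<pi> (h * a) (\<pi> (S b) m)) (\<Delta> k))) \<and>
       (\<forall>h k. \<forall>m\<in>V. sum_list (map (\<lambda>(a, b). \<pi> a (\<pi> (S b) (\<pi> k m))) (\<Delta> h))
                   = sum_list (map (\<lambda>(a, b). \<pi> a (\<pi> (S b * k) m)) (\<Delta> h))) \<and>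
       (\<forall>h k. \<forall>m\<in>V. sum_list (map (\<lambda>(a, b). \<pi> h (\<pi> (S a) (\<pi> b m))) (\<Delta> k))
                   = sum_list (map (\<lambda>(a, b). \<pi> (h * S a) (\<pi> b m)) (\<Delta> k))) \<and>
       (\<forall>h k. \<forall>m\<in>V. sum_list (map (\<lambda>(a, b). \<pi> (S a) (\<pi> b (\<pi> k m))) (\<Delta> h))
                   = sum_list (map (\<lambda>(a, b). \<pi> (S a) (\<pi> (b * k) m)) (\<Delta> h))))"

text \<open>Morphisms of partial modules (V, pi) -> (W, rho): linear maps V -> W commuting with
  the partial actions.  Two morphisms are equal iff they agree on V.\<close>
definition par_hom :: "('k \<Rightarrow> 'm::ab_group_add \<Rightarrow> 'm) \<Rightarrow> ('k \<Rightarrow> 'n::ab_group_add \<Rightarrow> 'n)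
    \<Rightarrow> 'm set \<times> ('h \<Rightarrow> 'm \<Rightarrow> 'm) \<Rightarrow> 'n set \<times> ('h \<Rightarrow> 'n \<Rightarrow> 'n) \<Rightarrow> ('m \<Rightarrow> 'n) \<Rightarrow> bool" where
  "par_hom sM sN P Q f \<longleftrightarrow>
     (\<forall>m\<in>fst P. f m \<in> fst Q) \<and> lin_on sM sN (fst P) f \<and>
     (\<forall>h. \<forall>m\<in>fst P. f (snd P h m) = snd Q h (f m))"

definition Tc :: "('h::ring_1 \<Rightarrow> ('h \<times> 'h) list) \<Rightarrow> ('h \<Rightarrow> 'h) \<Rightarrow> ('h \<Rightarrow> 'm \<Rightarrow> 'm)
    \<Rightarrow> ('m::ab_group_add \<Rightarrow> 'm) \<Rightarrow> 'h \<Rightarrow> 'm \<Rightarrow> 'm" where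
  "Tc \<Delta> S act T h m = sum_list (map (\<lambda>(a, b). act a (T (act (S b) m))) (\<Delta> h))"

definition c_condition :: "('h::ring_1 \<Rightarrow> ('h \<times> 'h) list) \<Rightarrow> ('h \<Rightarrow> 'h) \<Rightarrow> ('h \<Rightarrow> 'm \<Rightarrow> 'm)
    \<Rightarrow> ('m::ab_group_add \<Rightarrow> 'm) \<Rightarrow> bool" where
  "c_condition \<Delta> S act T \<longleftrightarrow> (\<forall>h m. Tc \<Delta> S act T h (T m) = T (Tc \<Delta> S act T h m))"

definition tobj :: "('k::field \<Rightarrow> 'h::ring_1 \<Rightarrow> 'h) \<Rightarrow> ('h \<Rightarrow> ('h \<times> 'h) list) \<Rightarrow> ('h \<Rightarrow> 'h)
    \<Rightarrow> ('k \<Rightarrow> 'm::ab_group_add \<Rightarrow> 'm) \<Rightarrow> ('h \<Rightarrow> 'm \<Rightarrow> 'm) \<times> ('m \<Rightarrow> 'm) \<Rightarrow> bool" where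
  "tobj sH \<Delta> S sM X \<longleftrightarrow>
     (case X of (act, T) \<Rightarrow>
        hmodule sH sM act \<and> Vector_Spaces.linear sM sM T \<and> (\<forall>m. T (T m) = T m) \<and>
        c_condition \<Delta> S act T)"

text \<open>Morphisms (M,T) -> (N,T'): linear maps f : T(M) -> T'(N) with
  f (T (h . m)) = T' (h . f m) for m in T(M).  Two morphisms are equal iff they agree on T(M).\<close>
definition thom :: "('k \<Rightarrow> 'm::ab_group_add \<Rightarrow> 'm) \<Rightarrow> ('k \<Rightarrow> 'n::ab_group_add \<Rightarrow> 'n)
    \<Rightarrow> ('h \<Rightarrow> 'm \<Rightarrow> 'm) \<times> ('m \<Rightarrow> 'm) \<Rightarrow> ('h \<Rightarrow> 'n \<Rightarrow> 'n) \<times> ('n \<Rightarrow> 'n) \<Rightarrow> ('m \<Rightarrow> 'n) \<Rightarrow> bool" where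
  "thom sM sN X Y f \<longleftrightarrow>
     (\<forall>m\<in>range (snd X). f m \<in> range (snd Y)) \<and> lin_on sM sN (range (snd X)) f \<and>
     (\<forall>h. \<forall>m\<in>range (snd X). f (snd X (fst X h m)) = snd Y (fst Y h (f m)))"

definition I_obj :: "('h \<Rightarrow> 'm \<Rightarrow> 'm) \<Rightarrow> ('h \<Rightarrow> 'm \<Rightarrow> 'm) \<times> ('m \<Rightarrow> 'm)" where
  "I_obj act = (act, id)"

definition I_mor :: "('m \<Rightarrow> 'n) \<Rightarrow> ('m \<Rightarrow> 'n)" where
  "I_mor f = f"

definition R_obj :: "('h \<Rightarrow> 'm \<Rightarrow> 'm) \<times> ('m \<Rightarrow> 'm) \<Rightarrow> 'm set \<times> ('h \<Rightarrow> 'm \<Rightarrow> 'm)" where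
  "R_obj X = (range (snd X), \<lambda>h m. snd X (fst X h m))"

definition R_mor :: "('m \<Rightarrow> 'n) \<Rightarrow> ('m \<Rightarrow> 'n)" where
  "R_mor f = f"

definition i_obj :: "('h \<Rightarrow> 'm \<Rightarrow> 'm) \<Rightarrow> 'm set \<times> ('h \<Rightarrow> 'm \<Rightarrow> 'm)" where
  "i_obj act = (UNIV, act)"

definition i_mor :: "('m \<Rightarrow> 'n) \<Rightarrow> ('m \<Rightarrow> 'n)" where
  "i_mor f = f"

end

theory Submission
  imports Defs
begin

lemma lin_add: "Vector_Spaces.linear s1 s2 f \<Longrightarrow> f (x + y) = f x + f y"
  by (simp add: Vector_Spaces.linear_iff)
lemma lin_scale: "Vector_Spaces.linear s1 s2 f \<Longrightarrow> f (s1 c x) = s2 c (f x)"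
  by (simp add: Vector_Spaces.linear_iff)
lemma lin_sum: "Vector_Spaces.linear s1 s2 f \<Longrightarrow> f (sum g A) = (\<Sum>x\<in>A. f (g x))"
  by (simp add: module_hom.sum linear_iff_module_hom)
lemma lin_vs1: "Vector_Spaces.linear s1 s2 f \<Longrightarrow> vector_space s1"
  by (simp add: Vector_Spaces.linear_iff)
lemma lin_vs2: "Vector_Spaces.linear s1 s2 f \<Longrightarrow> vector_space s2"
  by (simp add: Vector_Spaces.linear_iff)
lemma sum_list_map_sum: "sum_list (map (\<lambda>p. \<Sum>e\<in>E. F e p) xs) = (\<Sum>e\<in>E. sum_list (map (F e) xs))"
  by (induction xs) (simp_all add: sum.distrib)
lemma (in vector_space) sum_list_scale: "sum_list (map (\<lambda>p. scale (c p) v) xs) = scale (sum_list (map c xs)) v"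
  by (induction xs) (simp_all add: scale_left_distrib)
lemma (in vector_space) fd:
  assumes "finite X"
  obtains E g where "finite E" "\<And>e. Vector_Spaces.linear scale (*) (g e)" "\<And>x. x\<in>X \<Longrightarrow> x = (\<Sum>e\<in>E. scale (g e x) e)"
proof -
  define C where "C = extend_basis {}"
  have iC: "independent C" and sC: "span C = UNIV" unfolding C_def
    using independent_extend_basis[of "{}"] span_extend_basis[of "{}"] independent_empty by simp_all
  define E where "E = (\<Union>x\<in>X. {b. representation C x b \<noteq> 0})"
  have fE: "finite E" unfolding E_def using assms finite_representation by auto
  show ?thesis
  proof (rule that[of E "\<lambda>e v. representation C v e"])
    show "finite E" by fact
    show "Vector_Spaces.linear scale (*) (\<lambda>v. representation C v e)" for e
      using linear_representation[OF iC sC] .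
    fix x assume x: "x \<in> X"
    have "x = (\<Sum>b | representation C x b \<noteq> 0. scale (representation C x b) b)"
      using sum_nonzero_representation_eq[OF iC] sC by simp
    also have "\<dots> = (\<Sum>b\<in>E. scale (representation C x b) b)"
      by (rule sum.mono_neutral_left) (use fE x in \<open>auto simp: E_def\<close>)
    finally show "x = (\<Sum>e\<in>E. scale (representation C x e) e)" .
  qed
qed
lemma teq2_eval:
  assumes vH: "vector_space sH" and vV: "vector_space sV" and t: "teq2 sH t u"
   and B1: "\<And>y. Vector_Spaces.linear sH sV (\<lambda>x. B x y)" and B2: "\<And>x. Vector_Spaces.linear sH sV (B x)"
  shows "sum_list (map (\<lambda>(a,b). B a b) t) = sum_list (map (\<lambda>(a,b). B a b) u)"
proof -
  define X where "X = fst ` set t \<union> snd ` set t \<union> fst ` set u \<union> snd ` set u"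
  have "finite X" unfolding X_def by simp
  obtain E g where fE: "finite E" and lg: "\<And>e. Vector_Spaces.linear sH (*) (g e)"
    and ex: "\<And>x. x\<in>X \<Longrightarrow> x = (\<Sum>e\<in>E. sH (g e x) e)"
    by (rule vector_space.fd[OF vH \<open>finite X\<close>]) blast
  have expand: "B a b = (\<Sum>e\<in>E. \<Sum>e'\<in>E. sV (g e a * g e' b) (B e e'))" if "a\<in>X" "b\<in>X" for a b
  proof -
    have "B a b = B (\<Sum>e\<in>E. sH (g e a) e) (\<Sum>e'\<in>E. sH (g e' b) e')"
      using ex[OF that(1), symmetric] ex[OF that(2), symmetric] by simp
    also have "\<dots> = (\<Sum>e\<in>E. sV (g e a) (B e (\<Sum>e'\<in>E. sH (g e' b) e')))"
      using lin_sum[OF B1, of "\<lambda>e. sH (g e a) e" E] lin_scale[OF B1] by simp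
    also have "\<dots> = (\<Sum>e\<in>E. \<Sum>e'\<in>E. sV (g e a) (sV (g e' b) (B e e')))"
      by (simp only: lin_sum[OF B2] lin_scale[OF B2] module.scale_sum_right[OF vV[folded module_iff_vector_space]])
    also have "\<dots> = (\<Sum>e\<in>E. \<Sum>e'\<in>E. sV (g e a * g e' b) (B e e'))"
      by (simp only: module.scale_scale[OF vV[folded module_iff_vector_space]])
    finally show ?thesis .
  qed
  have L: "sum_list (map (\<lambda>(a,b). B a b) l) = (\<Sum>e\<in>E. \<Sum>e'\<in>E. sV (tens2 (g e) (g e') l) (B e e'))"
    if "set l \<subseteq> set t \<union> set u" for l
  proof -
    have "sum_list (map (\<lambda>(a,b). B a b) l) = sum_list (map (\<lambda>p. \<Sum>e\<in>E. \<Sum>e'\<in>E. sV (g e (fst p) * g e' (snd p)) (B e e')) l)"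
      by (rule arg_cong[where f=sum_list], rule map_cong[OF refl])
        (use that in \<open>force simp: X_def intro!: expand\<close>)
    also have "\<dots> = (\<Sum>e\<in>E. \<Sum>e'\<in>E. sum_list (map (\<lambda>p. sV (g e (fst p) * g e' (snd p)) (B e e')) l))"
      by (simp add: sum_list_map_sum)
    also have "\<dots> = (\<Sum>e\<in>E. \<Sum>e'\<in>E. sV (tens2 (g e) (g e') l) (B e e'))"
      by (simp add: vector_space.sum_list_scale[OF vV] tens2_def split_def)
    finally show ?thesis .
  qed
  show ?thesis using L[of t] L[of u] t lg unfolding teq2_def by simp
qed

lemma teq3_eval:
  assumes vH: "vector_space sH" and vV: "vector_space sV" and t: "teq3 sH t u"
   and B1: "\<And>y z. Vector_Spaces.linear sH sV (\<lambda>x. B x y z)"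
   and B2: "\<And>x z. Vector_Spaces.linear sH sV (\<lambda>y. B x y z)"
   and B3: "\<And>x y. Vector_Spaces.linear sH sV (B x y)"
  shows "sum_list (map (\<lambda>(a,b,c). B a b c) t) = sum_list (map (\<lambda>(a,b,c). B a b c) u)"
proof -
  define X where "X = (\<Union>(a,b,c)\<in>set t \<union> set u. {a,b,c})"
  have "finite X" unfolding X_def by auto
  obtain E g where fE: "finite E" and lg: "\<And>e. Vector_Spaces.linear sH (*) (g e)"
    and ex: "\<And>x. x\<in>X \<Longrightarrow> x = (\<Sum>e\<in>E. sH (g e x) e)"
    by (rule vector_space.fd[OF vH \<open>finite X\<close>]) blast
  have expand: "B a b c = (\<Sum>e\<in>E. \<Sum>e'\<in>E. \<Sum>e''\<in>E. sV (g e a * g e' b * g e'' c) (B e e' e''))"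
    if "a\<in>X" "b\<in>X" "c\<in>X" for a b c
  proof -
    have "B a b c = B (\<Sum>e\<in>E. sH (g e a) e) (\<Sum>e'\<in>E. sH (g e' b) e') (\<Sum>e''\<in>E. sH (g e'' c) e'')"
      using ex[OF that(1), symmetric] ex[OF that(2), symmetric] ex[OF that(3), symmetric] by simp
    also have "\<dots> = (\<Sum>e\<in>E. sV (g e a) (B e (\<Sum>e'\<in>E. sH (g e' b) e') (\<Sum>e''\<in>E. sH (g e'' c) e'')))"
      using lin_sum[OF B1, of "\<lambda>e. sH (g e a) e" E] lin_scale[OF B1] by simp
    also have "\<dots> = (\<Sum>e\<in>E. \<Sum>e'\<in>E. sV (g e a) (sV (g e' b) (B e e' (\<Sum>e''\<in>E. sH (g e'' c) e''))))"
      by (simp only: lin_sum[OF B2] lin_scale[OF B2] module.scale_sum_right[OF vV[folded module_iff_vector_space]])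
    also have "\<dots> = (\<Sum>e\<in>E. \<Sum>e'\<in>E. \<Sum>e''\<in>E. sV (g e a) (sV (g e' b) (sV (g e'' c) (B e e' e''))))"
      by (simp only: lin_sum[OF B3] lin_scale[OF B3] module.scale_sum_right[OF vV[folded module_iff_vector_space]])
    also have "\<dots> = (\<Sum>e\<in>E. \<Sum>e'\<in>E. \<Sum>e''\<in>E. sV (g e a * g e' b * g e'' c) (B e e' e''))"
      by (simp only: module.scale_scale[OF vV[folded module_iff_vector_space]] mult.assoc)
    finally show ?thesis .
  qed
  have L: "sum_list (map (\<lambda>(a,b,c). B a b c) l) = (\<Sum>e\<in>E. \<Sum>e'\<in>E. \<Sum>e''\<in>E. sV (tens3 (g e) (g e') (g e'') l) (B e e' e''))"
    if "set l \<subseteq> set t \<union> set u" for l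
  proof -
    have "sum_list (map (\<lambda>(a,b,c). B a b c) l) = sum_list (map (\<lambda>p. \<Sum>e\<in>E. \<Sum>e'\<in>E. \<Sum>e''\<in>E. sV (g e (fst p) * g e' (fst (snd p)) * g e'' (snd (snd p))) (B e e' e'')) l)"
    proof (rule arg_cong[where f=sum_list], rule map_cong[OF refl])
      fix p assume "p \<in> set l"
      then have pt: "p \<in> set t \<union> set u" using that by blast
      obtain a b c where p: "p = (a,b,c)" by (cases p)
      have "a \<in> X" "b \<in> X" "c \<in> X" using pt unfolding X_def p by blast+
      then show "(case p of (a,b,c) \<Rightarrow> B a b c) = (\<Sum>e\<in>E. \<Sum>e'\<in>E. \<Sum>e''\<in>E. sV (g e (fst p) * g e' (fst (snd p)) * g e'' (snd (snd p))) (B e e' e''))"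
        unfolding p using expand by simp
    qed
    also have "\<dots> = (\<Sum>e\<in>E. \<Sum>e'\<in>E. \<Sum>e''\<in>E. sum_list (map (\<lambda>p. sV (g e (fst p) * g e' (fst (snd p)) * g e'' (snd (snd p))) (B e e' e'')) l))"
      by (simp add: sum_list_map_sum)
    also have "\<dots> = (\<Sum>e\<in>E. \<Sum>e'\<in>E. \<Sum>e''\<in>E. sV (tens3 (g e) (g e') (g e'') l) (B e e' e''))"
      by (simp add: vector_space.sum_list_scale[OF vV] tens3_def split_def)
    finally show ?thesis .
  qed
  show ?thesis using L[of t] L[of u] t lg unfolding teq3_def by simp
qed


lemma linI:
  assumes "vector_space s1" "vector_space s2" "\<And>x y. f (x + y) = f x + f y" "\<And>c x. f (s1 c x) = s2 c (f x)"
  shows "Vector_Spaces.linear s1 s2 f"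
  using assms by (simp add: Vector_Spaces.linear_iff)

lemma comb_lin:
  assumes v1: "vector_space s1" and v2: "vector_space s2" and c: "\<And>c x y. f (s1 c x + y) = s2 c (f x) + f y"
  shows "Vector_Spaces.linear s1 s2 f"
proof -
  have o1: "s1 1 x = x" for x using module.scale_one[OF v1[folded module_iff_vector_space]] .
  have o2: "s2 1 x = x" for x using module.scale_one[OF v2[folded module_iff_vector_space]] .
  have z1: "s1 1 0 = 0" by (rule o1)
  have "f 0 = f 0 + f 0" using c[of 1 0 0] by (simp add: o1 o2)
  then have f0: "f 0 = 0" by simp
  show ?thesis
  proof (rule linI[OF v1 v2])
    show "f (x + y) = f x + f y" for x y using c[of 1 x y] by (simp add: o1 o2)
    show "f (s1 c x) = s2 c (f x)" for c x using c[of c x 0] by (simp add: f0)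
  qed
qed

lemma lin_comp: "Vector_Spaces.linear s1 s2 f \<Longrightarrow> Vector_Spaces.linear s2 s3 g \<Longrightarrow> Vector_Spaces.linear s1 s3 (\<lambda>x. g (f x))"
  using Vector_Spaces.linear_compose[of s1 s2 f s3 g] by (simp add: o_def)

lemma lin_zero: "Vector_Spaces.linear s1 s2 f \<Longrightarrow> f 0 = 0"
  by (simp add: module_hom.zero linear_iff_module_hom)

lemma lin_sum_list2: "Vector_Spaces.linear s1 s2 f \<Longrightarrow>
   f (sum_list (map (\<lambda>(a,b). g a b) xs)) = sum_list (map (\<lambda>(a,b). f (g a b)) xs)"
  by (induction xs) (auto simp: lin_zero lin_add)

lemma (in vector_space) sum_list_scale_right:
  "scale c (sum_list (map (\<lambda>(a,b). g a b) xs)) = sum_list (map (\<lambda>(a,b). scale c (g a b)) xs)"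
  by (induction xs) (auto simp: scale_right_distrib)

lemma lin_sumlist_fun:
  assumes v1: "vector_space s1" and v2: "vector_space s2" and G: "\<And>a b. Vector_Spaces.linear s1 s2 (G a b)"
  shows "Vector_Spaces.linear s1 s2 (\<lambda>z. sum_list (map (\<lambda>(a,b). G a b z) xs))"
proof (rule linI[OF v1 v2])
  show "sum_list (map (\<lambda>(a,b). G a b (x + y)) xs) = sum_list (map (\<lambda>(a,b). G a b x) xs) + sum_list (map (\<lambda>(a,b). G a b y) xs)" for x y
    by (induction xs) (auto simp: lin_add[OF G])
  show "sum_list (map (\<lambda>(a,b). G a b (s1 c x)) xs) = s2 c (sum_list (map (\<lambda>(a,b). G a b x) xs))" for c x
    by (simp add: vector_space.sum_list_scale_right[OF v2] lin_scale[OF G])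
qed

lemma aux1: "sum_list (map (\<lambda>(x1,x2,x3). F x1 x2 x3) [(a1, a2, b). (a1, a2) \<leftarrow> xs]) = sum_list (map (\<lambda>(a1,a2). F a1 a2 b) xs)"
  by (induction xs) auto
lemma aux2: "sum_list (map (\<lambda>(x1,x2,x3). F x1 x2 x3) [(a, b1, b2). (b1, b2) \<leftarrow> xs]) = sum_list (map (\<lambda>(b1,b2). F a b1 b2) xs)"
  by (induction xs) auto

lemma sl_L1: "sum_list (map (\<lambda>(x1,x2,x3). F x1 x2 x3) [(a1, a2, b). (a, b) \<leftarrow> t, (a1, a2) \<leftarrow> D a])
  = sum_list (map (\<lambda>(a,b). sum_list (map (\<lambda>(a1,a2). F a1 a2 b) (D a))) t)"
proof (induction t)
  case (Cons p t)
  obtain a b where p: "p = (a,b)" by (cases p)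
  have "sum_list (map (\<lambda>(x1,x2,x3). F x1 x2 x3) [(a1, a2, b). (a1, a2) \<leftarrow> D a])
     = sum_list (map (\<lambda>(a1,a2). F a1 a2 b) (D a))"
    by (rule aux1)
  with Cons show ?case by (simp add: p)
qed simp

lemma sl_L2: "sum_list (map (\<lambda>(x1,x2,x3). F x1 x2 x3) [(a, b1, b2). (a, b) \<leftarrow> t, (b1, b2) \<leftarrow> D b])
  = sum_list (map (\<lambda>(a,b). sum_list (map (\<lambda>(b1,b2). F a b1 b2) (D b))) t)"
proof (induction t)
  case (Cons p t)
  obtain a b where p: "p = (a,b)" by (cases p)
  have "sum_list (map (\<lambda>(x1,x2,x3). F x1 x2 x3) [(a, b1, b2). (b1, b2) \<leftarrow> D b])
     = sum_list (map (\<lambda>(b1,b2). F a b1 b2) (D b))"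
    by (rule aux2)
  with Cons show ?case by (simp add: p)
qed simp



definition Tp :: "('h::ring_1 \<Rightarrow> ('h \<times> 'h) list) \<Rightarrow> ('h \<Rightarrow> 'h) \<Rightarrow> ('h \<Rightarrow> 'm \<Rightarrow> 'm)
    \<Rightarrow> ('m::ab_group_add \<Rightarrow> 'm) \<Rightarrow> 'h \<Rightarrow> 'm \<Rightarrow> 'm" where
  "Tp \<Delta> S act T h m = sum_list (map (\<lambda>(a, b). act (S a) (T (act b m))) (\<Delta> h))"

locale ctx =
  fixes sH :: "'k::field \<Rightarrow> 'h::ring_1 \<Rightarrow> 'h" and \<Delta> :: "'h \<Rightarrow> ('h \<times> 'h) list"
    and \<epsilon> :: "'h \<Rightarrow> 'k" and S :: "'h \<Rightarrow> 'h"
    and sM :: "'k \<Rightarrow> 'm::ab_group_add \<Rightarrow> 'm" and act :: "'h \<Rightarrow> 'm \<Rightarrow> 'm" and T :: "'m \<Rightarrow> 'm"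
  assumes hopf: "hopf_algebra sH \<Delta> \<epsilon> S" and tob: "tobj sH \<Delta> S sM (act, T)"
begin

lemma vH: "vector_space sH" using hopf unfolding hopf_algebra_def by blast
lemma hm: "hmodule sH sM act" using tob unfolding tobj_def by simp
lemma vM: "vector_space sM" using hm unfolding hmodule_def by blast
lemma Tlin: "Vector_Spaces.linear sM sM T" using tob unfolding tobj_def by simp
lemma Tidem: "T (T m) = T m" using tob unfolding tobj_def by simp
lemma ccond: "Tc \<Delta> S act T h (T m) = T (Tc \<Delta> S act T h m)"
  using tob unfolding tobj_def c_condition_def by simp
lemma actlin: "Vector_Spaces.linear sM sM (act h)" using hm unfolding hmodule_def by blast
lemma act_comb: "act (sH c h + k) m = sM c (act h m) + act k m" using hm unfolding hmodule_def by blast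
lemma act_one: "act 1 m = m" using hm unfolding hmodule_def by blast
lemma act_mult: "act (h * k) m = act h (act k m)" using hm unfolding hmodule_def by blast
lemma actH_lin: "Vector_Spaces.linear sH sM (\<lambda>h. act h m)"
  by (rule comb_lin[OF vH vM]) (rule act_comb)
lemma act_scaleH: "act (sH c h) m = sM c (act h m)" using lin_scale[OF actH_lin] .
lemma sH1: "sH 1 x = x" using module.scale_one[OF vH[folded module_iff_vector_space]] .
lemma sM1: "sM 1 x = x" using module.scale_one[OF vM[folded module_iff_vector_space]] .
lemma Slin: "Vector_Spaces.linear sH sH S" using hopf unfolding hopf_algebra_def by blast
lemma multsc: "sH c (x * y) = sH c x * y" "sH c (x * y) = x * sH c y"
  using hopf unfolding hopf_algebra_def by blast+
lemma mulL_lin: "Vector_Spaces.linear sH sH (\<lambda>x. y * x)"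
  by (rule linI[OF vH vH]) (simp_all add: distrib_left multsc(2)[symmetric])
lemma mulR_lin: "Vector_Spaces.linear sH sH (\<lambda>x. x * y)"
  by (rule linI[OF vH vH]) (simp_all add: distrib_right multsc(1)[symmetric])
lemma coassoc: "teq3 sH [(a1, a2, b). (a, b) \<leftarrow> \<Delta> h, (a1, a2) \<leftarrow> \<Delta> a]
                    [(a, b1, b2). (a, b) \<leftarrow> \<Delta> h, (b1, b2) \<leftarrow> \<Delta> b]"
  using hopf unfolding hopf_algebra_def by blast
lemma Dlin: "teq2 sH (\<Delta> (sH c x + y)) (map (\<lambda>(a, b). (sH c a, b)) (\<Delta> x) @ \<Delta> y)"
  using hopf unfolding hopf_algebra_def by blast
lemma counit1: "sum_list (map (\<lambda>(a, b). sH (\<epsilon> a) b) (\<Delta> h)) = h"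
  using hopf unfolding hopf_algebra_def by blast
lemma counit2: "sum_list (map (\<lambda>(a, b). sH (\<epsilon> b) a) (\<Delta> h)) = h"
  using hopf unfolding hopf_algebra_def by blast
lemma antip: "sum_list (map (\<lambda>(a, b). S a * b) (\<Delta> h)) = sH (\<epsilon> h) 1"
  using hopf unfolding hopf_algebra_def by blast

lemma coassoc_eval:
  assumes B1: "\<And>y z. Vector_Spaces.linear sH sM (\<lambda>x. F x y z)"
   and B2: "\<And>x z. Vector_Spaces.linear sH sM (\<lambda>y. F x y z)"
   and B3: "\<And>x y. Vector_Spaces.linear sH sM (F x y)"
  shows "sum_list (map (\<lambda>(a,b). sum_list (map (\<lambda>(a1,a2). F a1 a2 b) (\<Delta> a))) (\<Delta> h))
       = sum_list (map (\<lambda>(a,b). sum_list (map (\<lambda>(b1,b2). F a b1 b2) (\<Delta> b))) (\<Delta> h))"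
  using teq3_eval[OF vH vM coassoc B1 B2 B3, of h] unfolding sl_L1 sl_L2 .

lemma Tc_lin: "Vector_Spaces.linear sM sM (Tc \<Delta> S act T h)"
proof -
  have "Vector_Spaces.linear sM sM (\<lambda>z. sum_list (map (\<lambda>(a,b). act a (T (act (S b) z))) (\<Delta> h)))"
    by (rule lin_sumlist_fun[OF vM vM]) (intro lin_comp[OF actlin] lin_comp[OF Tlin] actlin)
  then show ?thesis unfolding Tc_def[abs_def] .
qed

lemma Tc_comb: "Tc \<Delta> S act T (sH c x + y) z = sM c (Tc \<Delta> S act T x z) + Tc \<Delta> S act T y z"
proof -
  let ?B = "\<lambda>a b. act a (T (act (S b) z))"
  have B1: "Vector_Spaces.linear sH sM (\<lambda>a. ?B a b)" for b by (rule actH_lin)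
  have B2: "Vector_Spaces.linear sH sM (?B a)" for a
    by (intro lin_comp[OF Slin] lin_comp[OF actH_lin] lin_comp[OF Tlin] actlin)
  have "Tc \<Delta> S act T (sH c x + y) z = sum_list (map (\<lambda>(a,b). ?B a b) (map (\<lambda>(a, b). (sH c a, b)) (\<Delta> x) @ \<Delta> y))"
    unfolding Tc_def by (rule teq2_eval[OF vH vM Dlin B1 B2])
  also have "\<dots> = sum_list (map (\<lambda>(a,b). sM c (?B a b)) (\<Delta> x)) + Tc \<Delta> S act T y z"
    by (simp add: Tc_def act_scaleH split_def o_def)
  also have "\<dots> = sM c (Tc \<Delta> S act T x z) + Tc \<Delta> S act T y z"
    unfolding Tc_def by (simp add: vector_space.sum_list_scale_right[OF vM])
  finally show ?thesis .
qed

lemma TcH_lin: "Vector_Spaces.linear sH sM (\<lambda>h. Tc \<Delta> S act T h z)"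
  by (rule comb_lin[OF vH vM]) (rule Tc_comb)


lemma sum_act_S: "sum_list (map (\<lambda>(b1,b2). act (S b1) (act b2 y)) (\<Delta> b)) = sM (\<epsilon> b) y"
proof -
  have "sum_list (map (\<lambda>(b1,b2). act (S b1) (act b2 y)) (\<Delta> b))
      = sum_list (map (\<lambda>(b1,b2). act (S b1 * b2) y) (\<Delta> b))" by (simp add: act_mult)
  also have "\<dots> = act (sum_list (map (\<lambda>(b1,b2). S b1 * b2) (\<Delta> b))) y"
    by (rule lin_sum_list2[OF actH_lin, symmetric])
  also have "\<dots> = sM (\<epsilon> b) y" by (simp add: antip act_scaleH act_one)
  finally show ?thesis .
qed

lemma stepA: "act a (T y) = sum_list (map (\<lambda>(c,b). Tc \<Delta> S act T c (act b y)) (\<Delta> a))"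
proof -
  let ?F = "\<lambda>x1 x2 x3. act x1 (T (act (S x2) (act x3 y)))"
  have "sum_list (map (\<lambda>(c,b). Tc \<Delta> S act T c (act b y)) (\<Delta> a))
      = sum_list (map (\<lambda>(c,b). sum_list (map (\<lambda>(c1,c2). ?F c1 c2 b) (\<Delta> c))) (\<Delta> a))"
    unfolding Tc_def ..
  also have "\<dots> = sum_list (map (\<lambda>(c,b). sum_list (map (\<lambda>(b1,b2). ?F c b1 b2) (\<Delta> b))) (\<Delta> a))"
  proof (rule coassoc_eval)
    show "Vector_Spaces.linear sH sM (\<lambda>x. ?F x y' z)" for y' z by (rule actH_lin)
    show "Vector_Spaces.linear sH sM (\<lambda>y'. ?F x y' z)" for x z
      by (intro lin_comp[OF Slin] lin_comp[OF actH_lin] lin_comp[OF Tlin] actlin)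
    show "Vector_Spaces.linear sH sM (?F x y')" for x y'
      by (intro lin_comp[OF actH_lin] lin_comp[OF actlin] lin_comp[OF Tlin] actlin)
  qed
  also have "\<dots> = sum_list (map (\<lambda>(c,b). act c (T (sM (\<epsilon> b) y))) (\<Delta> a))"
  proof -
    have "sum_list (map (\<lambda>(b1,b2). ?F c b1 b2) (\<Delta> b)) = act c (T (sM (\<epsilon> b) y))" for c b
      using lin_sum_list2[OF lin_comp[OF Tlin actlin], of c "\<lambda>b1 b2. act (S b1) (act b2 y)" "\<Delta> b"]
      by (simp add: sum_act_S)
    then show ?thesis by simp
  qed
  also have "\<dots> = sum_list (map (\<lambda>(c,b). act (sH (\<epsilon> b) c) (T y)) (\<Delta> a))"
    by (simp add: lin_scale[OF Tlin] lin_scale[OF actlin] act_scaleH)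
  also have "\<dots> = act a (T y)"
    using lin_sum_list2[OF actH_lin, of "\<lambda>c b. sH (\<epsilon> b) c" "\<Delta> a", symmetric] by (simp add: counit2)
  finally show ?thesis by simp
qed

lemma stepC: "sum_list (map (\<lambda>(a,c). act (S a) (Tc \<Delta> S act T c z)) (\<Delta> u)) = T (act (S u) z)"
proof -
  let ?F = "\<lambda>x1 x2 x3. act (S x1 * x2) (T (act (S x3) z))"
  have "sum_list (map (\<lambda>(a,c). act (S a) (Tc \<Delta> S act T c z)) (\<Delta> u))
      = sum_list (map (\<lambda>(a,c). sum_list (map (\<lambda>(e,f). ?F a e f) (\<Delta> c))) (\<Delta> u))"
  proof -
    have "act (S a) (Tc \<Delta> S act T c z) = sum_list (map (\<lambda>(e,f). ?F a e f) (\<Delta> c))" for a c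
      unfolding Tc_def by (simp add: lin_sum_list2[OF actlin] act_mult)
    then show ?thesis by simp
  qed
  also have "\<dots> = sum_list (map (\<lambda>(g,f). sum_list (map (\<lambda>(a,e). ?F a e f) (\<Delta> g))) (\<Delta> u))"
  proof (rule coassoc_eval[symmetric])
    show "Vector_Spaces.linear sH sM (\<lambda>x. ?F x y' z')" for y' z'
      by (intro lin_comp[OF Slin] lin_comp[OF mulR_lin] actH_lin)
    show "Vector_Spaces.linear sH sM (\<lambda>y'. ?F x y' z')" for x z'
      by (intro lin_comp[OF mulL_lin] actH_lin)
    show "Vector_Spaces.linear sH sM (?F x y')" for x y'
      by (intro lin_comp[OF Slin] lin_comp[OF actH_lin] lin_comp[OF Tlin] actlin)
  qed
  also have "\<dots> = sum_list (map (\<lambda>(g,f). T (act (S (sH (\<epsilon> g) f)) z)) (\<Delta> u))"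
  proof -
    have "sum_list (map (\<lambda>(a,e). ?F a e f) (\<Delta> g)) = T (act (S (sH (\<epsilon> g) f)) z)" for g f
    proof -
      have "sum_list (map (\<lambda>(a,e). ?F a e f) (\<Delta> g)) = act (sum_list (map (\<lambda>(a,e). S a * e) (\<Delta> g))) (T (act (S f) z))"
        by (rule lin_sum_list2[OF actH_lin, symmetric])
      also have "\<dots> = T (act (S (sH (\<epsilon> g) f)) z)"
        by (simp add: antip act_scaleH act_one lin_scale[OF Slin] lin_scale[OF Tlin])
      finally show ?thesis .
    qed
    then show ?thesis by simp
  qed
  also have "\<dots> = T (act (S u) z)"
    using lin_sum_list2[OF lin_comp[OF Slin lin_comp[OF actH_lin Tlin]], of "\<lambda>g f. sH (\<epsilon> g) f" "\<Delta> u", symmetric]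
    by (simp add: counit1)
  finally show ?thesis .
qed

lemma key: "Tp \<Delta> S act T k (T m) = T (Tp \<Delta> S act T k m)"
proof -
  let ?F = "\<lambda>x1 x2 x3. act (S x1) (Tc \<Delta> S act T x2 (T (act x3 m)))"
  have "Tp \<Delta> S act T k (T m) = sum_list (map (\<lambda>(a,b). act (S a) (T (act b (T m)))) (\<Delta> k))"
    unfolding Tp_def ..
  also have "\<dots> = sum_list (map (\<lambda>(a,b). sum_list (map (\<lambda>(c,d). ?F a c d) (\<Delta> b))) (\<Delta> k))"
  proof -
    have "act (S a) (T (act b (T m))) = sum_list (map (\<lambda>(c,d). ?F a c d) (\<Delta> b))" for a b
      by (subst stepA) (simp add: lin_sum_list2[OF lin_comp[OF Tlin actlin]] ccond)
    then show ?thesis by simp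
  qed
  also have "\<dots> = sum_list (map (\<lambda>(u,d). sum_list (map (\<lambda>(a,c). ?F a c d) (\<Delta> u))) (\<Delta> k))"
  proof (rule coassoc_eval[symmetric])
    show "Vector_Spaces.linear sH sM (\<lambda>x. ?F x y' z')" for y' z'
      by (intro lin_comp[OF Slin] actH_lin)
    show "Vector_Spaces.linear sH sM (\<lambda>y'. ?F x y' z')" for x z'
      by (intro lin_comp[OF TcH_lin] actlin)
    show "Vector_Spaces.linear sH sM (?F x y')" for x y'
      by (intro lin_comp[OF actH_lin] lin_comp[OF Tlin] lin_comp[OF Tc_lin] actlin)
  qed
  also have "\<dots> = sum_list (map (\<lambda>(u,d). T (act (S u) (T (act d m)))) (\<Delta> k))"
    by (simp add: stepC)
  also have "\<dots> = T (Tp \<Delta> S act T k m)"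
    unfolding Tp_def by (simp add: lin_sum_list2[OF Tlin])
  finally show ?thesis .
qed


lemma Tc_fix: "m \<in> range T \<Longrightarrow> T (Tc \<Delta> S act T k m) = Tc \<Delta> S act T k m"
  by (auto simp: ccond[symmetric] Tidem)

lemma Tp_fix: "m \<in> range T \<Longrightarrow> T (Tp \<Delta> S act T k m) = Tp \<Delta> S act T k m"
  by (auto simp: key[symmetric] Tidem)

lemma parmod: "par_module sH \<Delta> S sM (R_obj (act, T))"
proof -
  have mM: "module sM" using vM by (simp add: module_iff_vector_space)
  have sub: "module.subspace sM (range T)"
  proof (rule module.subspaceI[OF mM])
    show "0 \<in> range T"
    proof -
      have "T 0 = 0" by (rule lin_zero[OF Tlin])
      then show ?thesis by (metis rangeI)
    qed
    show "x + y \<in> range T" if "x \<in> range T" "y \<in> range T" for x y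
    proof -
      from that obtain a b where "x = T a" "y = T b" by blast
      then have "x + y = T (a + b)" by (simp add: lin_add[OF Tlin])
      then show ?thesis by simp
    qed
    show "sM c x \<in> range T" if "x \<in> range T" for c x
    proof -
      from that obtain a where "x = T a" by blast
      then have "sM c x = T (sM c a)" by (simp add: lin_scale[OF Tlin])
      then show ?thesis by simp
    qed
  qed
  have ax1: "sum_list (map (\<lambda>(a, b). T (act h (T (act a (T (act (S b) m)))))) (\<Delta> k))
           = sum_list (map (\<lambda>(a, b). T (act (h * a) (T (act (S b) m)))) (\<Delta> k))"
    if "m \<in> range T" for h k m
  proof -
    have "sum_list (map (\<lambda>(a, b). T (act h (T (act a (T (act (S b) m)))))) (\<Delta> k))
        = T (act h (T (Tc \<Delta> S act T k m)))"
      unfolding Tc_def by (simp add: lin_sum_list2[OF lin_comp[OF lin_comp[OF Tlin actlin] Tlin]])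
    also have "\<dots> = T (act h (Tc \<Delta> S act T k m))" using Tc_fix[OF that] by simp
    also have "\<dots> = sum_list (map (\<lambda>(a, b). T (act (h * a) (T (act (S b) m)))) (\<Delta> k))"
      unfolding Tc_def by (simp add: lin_sum_list2[OF lin_comp[OF actlin Tlin]] act_mult)
    finally show ?thesis .
  qed
  have ax2: "sum_list (map (\<lambda>(a, b). T (act a (T (act (S b) (T (act k m)))))) (\<Delta> h))
           = sum_list (map (\<lambda>(a, b). T (act a (T (act (S b * k) m)))) (\<Delta> h))" for h k m
  proof -
    have "sum_list (map (\<lambda>(a, b). T (act a (T (act (S b) (T (act k m)))))) (\<Delta> h))
        = T (Tc \<Delta> S act T h (T (act k m)))"
      unfolding Tc_def by (simp add: lin_sum_list2[OF Tlin])
    also have "\<dots> = T (Tc \<Delta> S act T h (act k m))" by (simp add: ccond Tidem)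
    also have "\<dots> = sum_list (map (\<lambda>(a, b). T (act a (T (act (S b * k) m)))) (\<Delta> h))"
      unfolding Tc_def by (simp add: lin_sum_list2[OF Tlin] act_mult)
    finally show ?thesis .
  qed
  have ax3: "sum_list (map (\<lambda>(a, b). T (act h (T (act (S a) (T (act b m)))))) (\<Delta> k))
           = sum_list (map (\<lambda>(a, b). T (act (h * S a) (T (act b m)))) (\<Delta> k))"
    if "m \<in> range T" for h k m
  proof -
    have "sum_list (map (\<lambda>(a, b). T (act h (T (act (S a) (T (act b m)))))) (\<Delta> k))
        = T (act h (T (Tp \<Delta> S act T k m)))"
      unfolding Tp_def by (simp add: lin_sum_list2[OF lin_comp[OF lin_comp[OF Tlin actlin] Tlin]])
    also have "\<dots> = T (act h (Tp \<Delta> S act T k m))" using Tp_fix[OF that] by simp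
    also have "\<dots> = sum_list (map (\<lambda>(a, b). T (act (h * S a) (T (act b m)))) (\<Delta> k))"
      unfolding Tp_def by (simp add: lin_sum_list2[OF lin_comp[OF actlin Tlin]] act_mult)
    finally show ?thesis .
  qed
  have ax4: "sum_list (map (\<lambda>(a, b). T (act (S a) (T (act b (T (act k m)))))) (\<Delta> h))
           = sum_list (map (\<lambda>(a, b). T (act (S a) (T (act (b * k) m)))) (\<Delta> h))" for h k m
  proof -
    have "sum_list (map (\<lambda>(a, b). T (act (S a) (T (act b (T (act k m)))))) (\<Delta> h))
        = T (Tp \<Delta> S act T h (T (act k m)))"
      unfolding Tp_def by (simp add: lin_sum_list2[OF Tlin])
    also have "\<dots> = T (Tp \<Delta> S act T h (act k m))" by (simp add: key Tidem)
    also have "\<dots> = sum_list (map (\<lambda>(a, b). T (act (S a) (T (act (b * k) m)))) (\<Delta> h))"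
      unfolding Tp_def by (simp add: lin_sum_list2[OF Tlin] act_mult)
    finally show ?thesis .
  qed
  have lo: "lin_on sM sM (range T) (\<lambda>m. T (act h m))" for h
    unfolding lin_on_def by (simp add: lin_add[OF Tlin] lin_add[OF actlin] lin_scale[OF Tlin] lin_scale[OF actlin])
  have cb: "T (act (sH c h + k) m) = sM c (T (act h m)) + T (act k m)" for c h k m
    by (simp add: act_comb lin_add[OF Tlin] lin_scale[OF Tlin])
  have one: "m \<in> range T \<Longrightarrow> T (act 1 m) = m" for m by (auto simp: act_one Tidem)
  show ?thesis
    unfolding par_module_def R_obj_def
    using vM sub lo cb one ax1 ax2 ax3 ax4 by simp
qed

end

theorem mainTheorem8:
  fixes sH :: "'k::field \<Rightarrow> 'h::ring_1 \<Rightarrow> 'h"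
    and \<Delta> :: "'h \<Rightarrow> ('h \<times> 'h) list" and \<epsilon> :: "'h \<Rightarrow> 'k" and S :: "'h \<Rightarrow> 'h"
    and sM :: "'k \<Rightarrow> 'm::ab_group_add \<Rightarrow> 'm"
    and sN :: "'k \<Rightarrow> 'n::ab_group_add \<Rightarrow> 'n"
    and sP :: "'k \<Rightarrow> 'p::ab_group_add \<Rightarrow> 'p"
  assumes hopf: "hopf_algebra sH \<Delta> \<epsilon> S"
  shows
    \<comment> \<open>I is a functor: objects to objects, morphisms to morphisms, identities, composition\<close>
    "(\<forall>actM. hmodule sH sM actM \<longrightarrow> tobj sH \<Delta> S sM (I_obj actM)) \<and>
     (\<forall>actM actN f. hmodule sH sM actM \<longrightarrow> hmodule sH sN actN \<longrightarrow> mhom sM actM sN actN f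
        \<longrightarrow> thom sM sN (I_obj actM) (I_obj actN) (I_mor f)) \<and>
     (\<forall>actM. hmodule sH sM actM \<longrightarrow> (\<forall>m\<in>range (snd (I_obj actM)). I_mor id m = m)) \<and>
     (\<forall>actM actN actP (f :: 'm \<Rightarrow> 'n) (g :: 'n \<Rightarrow> 'p).
        hmodule sH sM actM \<longrightarrow> hmodule sH sN actN \<longrightarrow> hmodule sH sP actP \<longrightarrow>
        mhom sM actM sN actN f \<longrightarrow> mhom sN actN sP actP g \<longrightarrow>
        (\<forall>m\<in>range (snd (I_obj actM)). I_mor (g \<circ> f) m = (I_mor g \<circ> I_mor f) m)) \<and>
     \<comment> \<open>I is full and faithful\<close>
     (\<forall>actM actN. hmodule sH sM actM \<longrightarrow> hmodule sH sN actN \<longrightarrow>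
        (\<forall>g. thom sM sN (I_obj actM) (I_obj actN) g \<longrightarrow>
             (\<exists>f. mhom sM actM sN actN f \<and> (\<forall>m\<in>range (snd (I_obj actM)). I_mor f m = g m))) \<and>
        (\<forall>f1 f2. mhom sM actM sN actN f1 \<longrightarrow> mhom sM actM sN actN f2 \<longrightarrow>
             (\<forall>m\<in>range (snd (I_obj actM)). I_mor f1 m = I_mor f2 m) \<longrightarrow> f1 = f2)) \<and>
     \<comment> \<open>R is a functor\<close>
     (\<forall>X. tobj sH \<Delta> S sM X \<longrightarrow> par_module sH \<Delta> S sM (R_obj X)) \<and>
     (\<forall>X Y f. tobj sH \<Delta> S sM X \<longrightarrow> tobj sH \<Delta> S sN Y \<longrightarrow> thom sM sN X Y f
        \<longrightarrow> par_hom sM sN (R_obj X) (R_obj Y) (R_mor f)) \<and>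
     (\<forall>X. tobj sH \<Delta> S sM X \<longrightarrow> (\<forall>m\<in>fst (R_obj X). R_mor id m = m)) \<and>
     (\<forall>X Y Z (f :: 'm \<Rightarrow> 'n) (g :: 'n \<Rightarrow> 'p).
        tobj sH \<Delta> S sM X \<longrightarrow> tobj sH \<Delta> S sN Y \<longrightarrow> tobj sH \<Delta> S sP Z \<longrightarrow>
        thom sM sN X Y f \<longrightarrow> thom sN sP Y Z g \<longrightarrow>
        (\<forall>m\<in>fst (R_obj X). R_mor (g \<circ> f) m = (R_mor g \<circ> R_mor f) m)) \<and>
     \<comment> \<open>R is full and faithful\<close>
     (\<forall>X Y. tobj sH \<Delta> S sM X \<longrightarrow> tobj sH \<Delta> S sN Y \<longrightarrow>
        (\<forall>g. par_hom sM sN (R_obj X) (R_obj Y) g \<longrightarrow>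
             (\<exists>f. thom sM sN X Y f \<and> (\<forall>m\<in>fst (R_obj X). R_mor f m = g m))) \<and>
        (\<forall>f1 f2. thom sM sN X Y f1 \<longrightarrow> thom sM sN X Y f2 \<longrightarrow>
             (\<forall>m\<in>fst (R_obj X). R_mor f1 m = R_mor f2 m) \<longrightarrow>
             (\<forall>m\<in>range (snd X). f1 m = f2 m))) \<and>
     \<comment> \<open>the inclusion i equals R \<circ> I\<close>
     (\<forall>actM. hmodule sH sM actM \<longrightarrow> R_obj (I_obj actM) = i_obj actM) \<and>
     (\<forall>f :: 'm \<Rightarrow> 'n. R_mor (I_mor f) = i_mor f)"
proof -
  have vs: "hmodule sH s act \<Longrightarrow> vector_space s" for s :: "'k \<Rightarrow> 'x::ab_group_add \<Rightarrow> 'x" and act :: "'h \<Rightarrow> 'x \<Rightarrow> 'x"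
    unfolding hmodule_def by blast
  have c1: "\<forall>actM. hmodule sH sM actM \<longrightarrow> tobj sH \<Delta> S sM (I_obj actM)"
  proof (intro allI impI)
    fix actM assume h: "hmodule sH sM actM"
    have "Vector_Spaces.linear sM sM id" by (rule linI[OF vs[OF h] vs[OF h]]) simp_all
    then show "tobj sH \<Delta> S sM (I_obj actM)"
      using h unfolding tobj_def I_obj_def c_condition_def by simp
  qed
  have c2: "\<forall>actM actN f. hmodule sH sM actM \<longrightarrow> hmodule sH sN actN \<longrightarrow> mhom sM actM sN actN f
        \<longrightarrow> thom sM sN (I_obj actM) (I_obj actN) (I_mor f)"
    by (auto simp: thom_def I_obj_def I_mor_def mhom_def lin_on_def lin_add lin_scale)
  have c5: "\<forall>actM actN. hmodule sH sM actM \<longrightarrow> hmodule sH sN actN \<longrightarrow>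
        (\<forall>g. thom sM sN (I_obj actM) (I_obj actN) g \<longrightarrow>
             (\<exists>f. mhom sM actM sN actN f \<and> (\<forall>m\<in>range (snd (I_obj actM)). I_mor f m = g m))) \<and>
        (\<forall>f1 f2. mhom sM actM sN actN f1 \<longrightarrow> mhom sM actM sN actN f2 \<longrightarrow>
             (\<forall>m\<in>range (snd (I_obj actM)). I_mor f1 m = I_mor f2 m) \<longrightarrow> f1 = f2)"
  proof (intro allI impI conjI)
    fix actM actN g assume hM: "hmodule sH sM actM" and hN: "hmodule sH sN actN"
      and g: "thom sM sN (I_obj actM) (I_obj actN) g"
    have "Vector_Spaces.linear sM sN g"
      by (rule comb_lin[OF vs[OF hM] vs[OF hN]]) (use g in \<open>simp add: thom_def I_obj_def lin_on_def\<close>)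
    then have "mhom sM actM sN actN g" using g by (simp add: mhom_def thom_def I_obj_def)
    then show "\<exists>f. mhom sM actM sN actN f \<and> (\<forall>m\<in>range (snd (I_obj actM)). I_mor f m = g m)"
      by (auto simp: I_mor_def)
  next
    fix actM actN f1 f2
    assume "\<forall>m\<in>range (snd (I_obj actM)). I_mor f1 m = I_mor (f2 :: 'm \<Rightarrow> 'n) m"
    then show "f1 = f2" by (auto simp: I_mor_def I_obj_def)
  qed
  have c6: "\<forall>X. tobj sH \<Delta> S sM X \<longrightarrow> par_module sH \<Delta> S sM (R_obj X)"
  proof (intro allI impI)
    fix X assume t: "tobj sH \<Delta> S sM X"
    obtain act T where X: "X = (act, T)" by (cases X)
    show "par_module sH \<Delta> S sM (R_obj X)"
      unfolding X by (rule ctx.parmod, rule ctx.intro[OF hopf t[unfolded X]])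
  qed
  have c11: "\<forall>actM. hmodule sH sM actM \<longrightarrow> R_obj (I_obj actM) = i_obj actM"
    by (simp add: R_obj_def I_obj_def i_obj_def)
  have c3: "\<forall>actM. hmodule sH sM actM \<longrightarrow> (\<forall>m\<in>range (snd (I_obj actM)). I_mor id m = m)"
    by (simp add: I_mor_def)
  have c4: "\<forall>actM actN actP (f :: 'm \<Rightarrow> 'n) (g :: 'n \<Rightarrow> 'p).
        hmodule sH sM actM \<longrightarrow> hmodule sH sN actN \<longrightarrow> hmodule sH sP actP \<longrightarrow>
        mhom sM actM sN actN f \<longrightarrow> mhom sN actN sP actP g \<longrightarrow>
        (\<forall>m\<in>range (snd (I_obj actM)). I_mor (g \<circ> f) m = (I_mor g \<circ> I_mor f) m)"
    by (simp add: I_mor_def)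
  have c7: "\<forall>X Y f. tobj sH \<Delta> S sM X \<longrightarrow> tobj sH \<Delta> S sN Y \<longrightarrow> thom sM sN X Y f
        \<longrightarrow> par_hom sM sN (R_obj X) (R_obj Y) (R_mor f)"
    by (simp add: thom_def par_hom_def R_obj_def R_mor_def)
  have c8: "\<forall>X. tobj sH \<Delta> S sM X \<longrightarrow> (\<forall>m\<in>fst (R_obj X). R_mor id m = m)"
    by (simp add: R_mor_def)
  have c9: "\<forall>X Y Z (f :: 'm \<Rightarrow> 'n) (g :: 'n \<Rightarrow> 'p).
        tobj sH \<Delta> S sM X \<longrightarrow> tobj sH \<Delta> S sN Y \<longrightarrow> tobj sH \<Delta> S sP Z \<longrightarrow>
        thom sM sN X Y f \<longrightarrow> thom sN sP Y Z g \<longrightarrow>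
        (\<forall>m\<in>fst (R_obj X). R_mor (g \<circ> f) m = (R_mor g \<circ> R_mor f) m)"
    by (simp add: R_mor_def)
  have c10: "\<forall>X Y. tobj sH \<Delta> S sM X \<longrightarrow> tobj sH \<Delta> S sN Y \<longrightarrow>
        (\<forall>g. par_hom sM sN (R_obj X) (R_obj Y) g \<longrightarrow>
             (\<exists>f. thom sM sN X Y f \<and> (\<forall>m\<in>fst (R_obj X). R_mor f m = g m))) \<and>
        (\<forall>f1 f2. thom sM sN X Y f1 \<longrightarrow> thom sM sN X Y f2 \<longrightarrow>
             (\<forall>m\<in>fst (R_obj X). R_mor f1 m = R_mor f2 m) \<longrightarrow>
             (\<forall>m\<in>range (snd X). f1 m = f2 m))"
  proof (intro allI impI conjI)
    fix X Y g assume "par_hom sM sN (R_obj X) (R_obj Y) (g :: 'm \<Rightarrow> 'n)"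
    then have "thom sM sN X Y g" by (simp add: thom_def par_hom_def R_obj_def)
    then show "\<exists>f. thom sM sN X Y f \<and> (\<forall>m\<in>fst (R_obj X). R_mor f m = g m)"
      by (auto simp: R_mor_def)
  next
    fix X Y f1 f2
    assume "\<forall>m\<in>fst (R_obj X). R_mor f1 m = R_mor (f2 :: 'm \<Rightarrow> 'n) m"
    then show "\<forall>m\<in>range (snd X). f1 m = f2 m" by (simp add: R_mor_def R_obj_def)
  qed
  have c12: "\<forall>f :: 'm \<Rightarrow> 'n. R_mor (I_mor f) = i_mor f"
    by (simp add: R_mor_def I_mor_def i_mor_def)
  show ?thesis
    by (intro conjI; fact)
qed

end
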